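(* Let $n\in\mathbb N$, let $W,W',M,M'$ be pairwise disjoint sets each of cardinality $n$, and let $w\in W$, $m'\in M'$. There exist functions $\succ_{W\cup W'}:\mathcal P(W,M)\to\mathcal F(W\cup W',M\cup M')$ and $\succ_{M\cup M'}:\mathcal P(M,W)\to\mathcal F(M\cup M',W\cup W')$ such that for every $\succ_W\in\mathcal P(W,M)$ and $\succ_M\in\mathcal P(M,W)$ the following are equivalent: (1) $w$ is single in some marriage between $W$ and $M$ that is stable with respect to $\succ_W,\succ_M$; (2) $w$ and $m'$ are married in some marriage between $W\cup W'$ and $M\cup M'$ that is stable with respect to $\succ_{W\cup W'}(\succ_W)$ and $\succ_{M\cup M'}(\succ_M)$; (3) $w$ and $m'$ are married in every marriage between $W\cup W'$ and $M\cup M'$ that is stable with respect to $\succ_{W\cup W'}(\succ_W)$ and $\succ_{M\cup M'}(\succ_M)$.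
   Context: $\mathcal P(A,B)$ is the set of profiles assigning to each $a\in A$ a preference list, i.e. a totally ordered subset of $B$ (others unacceptable); $\mathcal F(A,B)\subseteq\mathcal P(A,B)$ consists of profiles in which every list contains all of $B$. A participant prefers $x$ over $x'$ if $x$ precedes $x'$ on their list, or $x$ is on the list and $x'$ is not (being single counts as being matched to someone off the list). A marriage is a one-to-one map between a subset of the women and a subset of the men; unmatched participants are single. A marriage is stable if every married participant is married to someone on their list and there is no blocking pair $(w,m)$ where $w$ prefers $m$ to her current situation and $m$ prefers $w$ to his. *)

theory Defs
  imports Main
begin

text \<open>A profile over A and B: each a in A gets a preference list, i.e. a repetition-free
  list of elements of B (listed = acceptable, earlier = more preferred).  Outside A the
  profile is fixed to the empty list so that profiles carry no extra information.\<close>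
definition profiles :: "'a set \<Rightarrow> 'a set \<Rightarrow> ('a \<Rightarrow> 'a list) set" where
  "profiles A B = {P. (\<forall>a\<in>A. distinct (P a) \<and> set (P a) \<subseteq> B) \<and> (\<forall>a. a \<notin> A \<longrightarrow> P a = [])}"

definition full_profiles :: "'a set \<Rightarrow> 'a set \<Rightarrow> ('a \<Rightarrow> 'a list) set" where
  "full_profiles A B = {P. P \<in> profiles A B \<and> (\<forall>a\<in>A. set (P a) = B)}"

text \<open>With list l, x is preferred over the current situation y (None = single, which
  counts as being matched to someone off the list).\<close>
definition prefers :: "'a list \<Rightarrow> 'a \<Rightarrow> 'a option \<Rightarrow> bool" where
  "prefers l x y \<longleftrightarrow> x \<in> set l \<and>
     (case y of None \<Rightarrow> True | Some y' \<Rightarrow> y' \<notin> set l \<or> x \<in> set (takeWhile (\<lambda>z. z \<noteq> y') l))"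

definition marriage :: "'a set \<Rightarrow> 'a set \<Rightarrow> ('a \<times> 'a) set \<Rightarrow> bool" where
  "marriage A B \<mu> \<longleftrightarrow> \<mu> \<subseteq> A \<times> B \<and>
     (\<forall>p\<in>\<mu>. \<forall>q\<in>\<mu>. fst p = fst q \<longleftrightarrow> snd p = snd q)"

definition wpartner :: "('a \<times> 'a) set \<Rightarrow> 'a \<Rightarrow> 'a option" where
  "wpartner \<mu> x = (if \<exists>y. (x, y) \<in> \<mu> then Some (THE y. (x, y) \<in> \<mu>) else None)"

definition mpartner :: "('a \<times> 'a) set \<Rightarrow> 'a \<Rightarrow> 'a option" where
  "mpartner \<mu> y = (if \<exists>x. (x, y) \<in> \<mu> then Some (THE x. (x, y) \<in> \<mu>) else None)"

definition stable :: "'a set \<Rightarrow> 'a set \<Rightarrow> ('a \<Rightarrow> 'a list) \<Rightarrow> ('a \<Rightarrow> 'a list) \<Rightarrow> ('a \<times> 'a) set \<Rightarrow> bool" where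
  "stable A B PA PB \<mu> \<longleftrightarrow> marriage A B \<mu> \<and>
     (\<forall>(x, y)\<in>\<mu>. y \<in> set (PA x) \<and> x \<in> set (PB y)) \<and>
     \<not> (\<exists>x\<in>A. \<exists>y\<in>B. prefers (PA x) y (wpartner \<mu> x) \<and> prefers (PB y) x (mpartner \<mu> y))"

end

theory Submission
  imports Defs
begin

fun pos :: "'a list \<Rightarrow> 'a \<Rightarrow> nat" where
  "pos [] x = 0" | "pos (c # l) x = (if c = x then 0 else Suc (pos l x))"

lemma pos_lt: "x \<in> set l \<Longrightarrow> pos l x < length l" by (induction l) auto
lemma pos_notin: "x \<notin> set l \<Longrightarrow> pos l x = length l" by (induction l) auto
lemma nth_pos: "x \<in> set l \<Longrightarrow> l ! pos l x = x" by (induction l) auto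
lemma pos_inj: "x \<in> set l \<Longrightarrow> y \<in> set l \<Longrightarrow> pos l x = pos l y \<Longrightarrow> x = y" by (metis nth_pos)
lemma pos_append: "pos (a @ b) x = (if x \<in> set a then pos a x else length a + pos b x)"
  by (induction a) auto
lemma tw_pos: "x \<in> set (takeWhile (\<lambda>z. z \<noteq> y) l) \<longleftrightarrow> x \<in> set l \<and> pos l x < pos l y"
  by (induction l) auto

lemma prefers_None[simp]: "prefers l x None \<longleftrightarrow> x \<in> set l" by (simp add: prefers_def)
lemma prefers_Some[simp]: "prefers l x (Some y) \<longleftrightarrow> x \<in> set l \<and> pos l x < pos l y"
  using pos_lt[of x l] pos_notin[of y l] by (auto simp: prefers_def tw_pos)

lemma marr_uniq1: "marriage A B \<mu> \<Longrightarrow> (x,y) \<in> \<mu> \<Longrightarrow> (x,y') \<in> \<mu> \<Longrightarrow> y = y'"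
  unfolding marriage_def by fastforce
lemma marr_uniq2: "marriage A B \<mu> \<Longrightarrow> (x,y) \<in> \<mu> \<Longrightarrow> (x',y) \<in> \<mu> \<Longrightarrow> x = x'"
  unfolding marriage_def by fastforce

lemma wp_Some: "marriage A B \<mu> \<Longrightarrow> (x,y) \<in> \<mu> \<Longrightarrow> wpartner \<mu> x = Some y"
  unfolding wpartner_def by (auto intro!: the_equality dest: marr_uniq1)
lemma mp_Some: "marriage A B \<mu> \<Longrightarrow> (x,y) \<in> \<mu> \<Longrightarrow> mpartner \<mu> y = Some x"
  unfolding mpartner_def by (auto intro!: the_equality dest: marr_uniq2)
lemma wp_None: "(\<And>y. (x,y) \<notin> \<mu>) \<Longrightarrow> wpartner \<mu> x = None"
  unfolding wpartner_def by auto
lemma mp_None: "(\<And>x. (x,y) \<notin> \<mu>) \<Longrightarrow> mpartner \<mu> y = None"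
  unfolding mpartner_def by auto
lemma wp_cases: "marriage A B \<mu> \<Longrightarrow> (wpartner \<mu> x = None \<and> (\<forall>y. (x,y) \<notin> \<mu>)) \<or> (\<exists>y. wpartner \<mu> x = Some y \<and> (x,y) \<in> \<mu>)"
  by (metis wp_None wp_Some)
lemma mp_cases: "marriage A B \<mu> \<Longrightarrow> (mpartner \<mu> y = None \<and> (\<forall>x. (x,y) \<notin> \<mu>)) \<or> (\<exists>x. mpartner \<mu> y = Some x \<and> (x,y) \<in> \<mu>)"
  by (metis mp_None mp_Some)

lemma stableD:
  assumes "stable A B PA PB \<mu>"
  shows "marriage A B \<mu>" "\<And>x y. (x,y) \<in> \<mu> \<Longrightarrow> y \<in> set (PA x) \<and> x \<in> set (PB y)"
    "\<And>x y. x \<in> A \<Longrightarrow> y \<in> B \<Longrightarrow> prefers (PA x) y (wpartner \<mu> x) \<Longrightarrow> prefers (PB y) x (mpartner \<mu> y) \<Longrightarrow> False"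
    "\<And>x y. (x,y) \<in> \<mu> \<Longrightarrow> x \<in> A \<and> y \<in> B"
  using assms unfolding stable_def marriage_def by blast+

lemma stableI:
  assumes "marriage A B \<mu>" "\<And>x y. (x,y) \<in> \<mu> \<Longrightarrow> y \<in> set (PA x) \<and> x \<in> set (PB y)"
    "\<And>x y. x \<in> A \<Longrightarrow> y \<in> B \<Longrightarrow> prefers (PA x) y (wpartner \<mu> x) \<Longrightarrow> prefers (PB y) x (mpartner \<mu> y) \<Longrightarrow> False"
  shows "stable A B PA PB \<mu>"
  using assms unfolding stable_def by blast

lemma stable_swap: "stable A B PA PB \<mu> \<Longrightarrow> stable B A PB PA (\<mu>\<inverse>)"
proof -
  assume st: "stable A B PA PB \<mu>"
  have wm: "wpartner (\<mu>\<inverse>) = mpartner \<mu>" "mpartner (\<mu>\<inverse>) = wpartner \<mu>"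
    by (auto simp: wpartner_def mpartner_def fun_eq_iff)
  show ?thesis
  proof (rule stableI)
    show "marriage B A (\<mu>\<inverse>)" using stableD(1)[OF st] unfolding marriage_def by fastforce
  next
    fix x y assume "(x,y) \<in> \<mu>\<inverse>" then show "y \<in> set (PB x) \<and> x \<in> set (PA y)" using stableD(2)[OF st] by auto
  next
    fix x y assume "x \<in> B" "y \<in> A" "prefers (PB x) y (wpartner (\<mu>\<inverse>) x)" "prefers (PA y) x (mpartner (\<mu>\<inverse>) y)"
    then show False using stableD(3)[OF st, of y x] wm by auto
  qed
qed


lemma prefers_in: "prefers l x y \<Longrightarrow> x \<in> set l" by (simp add: prefers_def)
lemma set_tlD: "x \<in> set (tl l) \<Longrightarrow> x \<in> set l" by (cases l) auto

lemma drop_head: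
  assumes st: "stable A B PA' PB \<mu>" and PA': "PA' = PA(a := tl (PA a))"
    and ne: "PA a \<noteq> []" and dist: "distinct (PA a)"
    and noblock: "\<not> prefers (PB (hd (PA a))) a (mpartner \<mu> (hd (PA a)))"
  shows "stable A B PA PB \<mu>"
proof (rule stableI)
  show "marriage A B \<mu>" using stableD(1)[OF st] .
next
  fix x y assume "(x,y) \<in> \<mu>"
  then show "y \<in> set (PA x) \<and> x \<in> set (PB y)" using stableD(2)[OF st] PA'
  proof -
    have "y \<in> set (PA' x) \<and> x \<in> set (PB y)" using stableD(2)[OF st] \<open>(x,y) \<in> \<mu>\<close> by blast
    then show ?thesis using PA' by (cases "x = a") (auto dest: set_tlD)
  qed
next
  fix x y assume x: "x \<in> A" and y: "y \<in> B" and p1: "prefers (PA x) y (wpartner \<mu> x)"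
    and p2: "prefers (PB y) x (mpartner \<mu> y)"
  show False
  proof (cases "x = a")
    case False
    then show False using stableD(3)[OF st x y] p1 p2 PA' by auto
  next
    case True
    obtain h t where ht: "PA a = h # t" using ne by (cases "PA a") auto
    show False
    proof (cases "y = h")
      case True
      then show False using noblock p2 ht \<open>x = a\<close> by simp
    next
      case False
      have "prefers (PA' x) y (wpartner \<mu> x)"
      proof (cases "wpartner \<mu> x")
        case None
        then show ?thesis using p1 ht False PA' \<open>x = a\<close> by auto
      next
        case (Some z)
        then have "(x,z) \<in> \<mu>" using wp_cases[OF stableD(1)[OF st], of x] by auto
        then have "z \<in> set (PA' x)" using stableD(2)[OF st] by blast
        then have "z \<in> set t" using PA' ht \<open>x = a\<close> by auto
        then have "z \<noteq> h" using dist ht by auto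
        then show ?thesis using p1 ht False PA' \<open>x = a\<close> Some by auto
      qed
      then show False using stableD(3)[OF st x y] p2 by auto
    qed
  qed
qed

lemma exists_stable:
  assumes fin: "finite A" and PA: "\<forall>a\<in>A. distinct (PA a) \<and> set (PA a) \<subseteq> B"
    and PB: "\<forall>b\<in>B. set (PB b) \<subseteq> A"
  shows "\<exists>\<mu>. stable A B PA PB \<mu>"
  using PA
proof (induction "\<Sum>a\<in>A. length (PA a)" arbitrary: PA rule: less_induct)
  case less
  note IH = less.hyps and PA = less.prems
  have dec: "(\<Sum>a\<in>A. length ((PA(a0 := tl (PA a0))) a)) < (\<Sum>a\<in>A. length (PA a))"
    if "a0 \<in> A" "PA a0 \<noteq> []" for a0
    using that by (intro sum_strict_mono_ex1[OF fin]) (auto intro!: bexI[of _ a0])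
  have hyp': "\<forall>a\<in>A. distinct ((PA(a0 := tl (PA a0))) a) \<and> set ((PA(a0 := tl (PA a0))) a) \<subseteq> B"
    for a0 using PA by (auto dest!: set_tlD simp: distinct_tl)
  show ?case
  proof (cases "\<exists>a\<in>A. PA a \<noteq> [] \<and> a \<notin> set (PB (hd (PA a)))")
    case True
    then obtain a where a: "a \<in> A" "PA a \<noteq> []" "a \<notin> set (PB (hd (PA a)))" by blast
    from IH[OF dec[OF a(1,2)] hyp'] obtain \<mu> where st: "stable A B (PA(a := tl (PA a))) PB \<mu>" by blast
    have "stable A B PA PB \<mu>"
      by (rule drop_head[OF st refl a(2)]) (use PA a in \<open>auto dest: prefers_in\<close>)
    then show ?thesis by blast
  next
    case False
    note nb1 = False
    show ?thesis
    proof (cases "\<exists>a1\<in>A. \<exists>a2\<in>A. a1 \<noteq> a2 \<and> PA a1 \<noteq> [] \<and> PA a2 \<noteq> [] \<and> hd (PA a1) = hd (PA a2)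
        \<and> prefers (PB (hd (PA a1))) a1 (Some a2)")
      case True
      then obtain a1 a2 where a: "a1 \<in> A" "a2 \<in> A" "a1 \<noteq> a2" "PA a1 \<noteq> []" "PA a2 \<noteq> []"
        "hd (PA a1) = hd (PA a2)" "prefers (PB (hd (PA a1))) a1 (Some a2)" by blast
      define h where "h = hd (PA a1)"
      from IH[OF dec[OF a(2,5)] hyp'] obtain \<mu> where st: "stable A B (PA(a2 := tl (PA a2))) PB \<mu>" by blast
      have hB: "h \<in> B" using PA a(1,4) h_def by (auto dest: hd_in_set)
      have a1h: "a1 \<in> set (PB h)" using a(7) h_def by auto
      obtain t1 where t1: "PA a1 = h # t1" using a(4) h_def by (cases "PA a1") auto
      have key: "\<exists>u. mpartner \<mu> h = Some u \<and> pos (PB h) u \<le> pos (PB h) a1"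
      proof (cases "(a1, h) \<in> \<mu>")
        case True
        then show ?thesis using mp_Some[OF stableD(1)[OF st]] by auto
      next
        case False
        have "prefers ((PA(a2 := tl (PA a2))) a1) h (wpartner \<mu> a1)"
        proof (cases "wpartner \<mu> a1")
          case (Some z)
          then have "(a1,z) \<in> \<mu>" using wp_cases[OF stableD(1)[OF st], of a1] by auto
          then have "z \<noteq> h" using False by auto
          then show ?thesis using Some t1 a(3) by simp
        qed (use t1 a(3) in simp)
        then have np: "\<not> prefers (PB h) a1 (mpartner \<mu> h)"
          using stableD(3)[OF st a(1) hB] by blast
        then show ?thesis using a1h by (cases "mpartner \<mu> h") auto
      qed
      have "stable A B PA PB \<mu>"
        by (rule drop_head[OF st refl a(5)]) (use PA a key h_def in auto)
      then show ?thesis by blast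
    next
      case False
      note nb2 = False
      define \<mu> where "\<mu> = {(a, hd (PA a)) | a. a \<in> A \<and> PA a \<noteq> []}"
      have acc: "y \<in> set (PA x) \<and> x \<in> set (PB y)" if "(x,y) \<in> \<mu>" for x y
        using that nb1 unfolding \<mu>_def by auto
      have mar: "marriage A B \<mu>"
        unfolding marriage_def
      proof (intro conjI ballI)
        show "\<mu> \<subseteq> A \<times> B" using PA unfolding \<mu>_def by (auto dest: hd_in_set)
      next
        fix p q assume p: "p \<in> \<mu>" and q: "q \<in> \<mu>"
        show "(fst p = fst q) = (snd p = snd q)"
        proof
          assume "fst p = fst q" then show "snd p = snd q" using p q unfolding \<mu>_def by auto
        next
          assume e: "snd p = snd q"
          obtain a1 where p': "p = (a1, hd (PA a1))" "a1 \<in> A" "PA a1 \<noteq> []" using p unfolding \<mu>_def by auto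
          obtain a2 where q': "q = (a2, hd (PA a2))" "a2 \<in> A" "PA a2 \<noteq> []" using q unfolding \<mu>_def by auto
          have i1: "a1 \<in> set (PB (hd (PA a1)))" and i2: "a2 \<in> set (PB (hd (PA a1)))"
            using acc p q p' q' e by auto
          show "fst p = fst q"
          proof (rule ccontr)
            assume ne: "fst p \<noteq> fst q"
            then have "pos (PB (hd (PA a1))) a1 \<noteq> pos (PB (hd (PA a1))) a2"
              using pos_inj[OF i1 i2] p' q' by auto
            then show False using nb2 p' q' e ne i1 i2
              by (cases "pos (PB (hd (PA a1))) a1 < pos (PB (hd (PA a1))) a2") (auto, metis linorder_neqE_nat)
          qed
        qed
      qed
      have "stable A B PA PB \<mu>"
      proof (rule stableI[OF mar acc])
        fix x y assume x: "x \<in> A" and p1: "prefers (PA x) y (wpartner \<mu> x)"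
        show False
        proof (cases "PA x")
          case Nil then show False using p1 by (cases "wpartner \<mu> x") auto
        next
          case (Cons c r)
          then have "(x, c) \<in> \<mu>" using x unfolding \<mu>_def by auto
          then show False using p1 wp_Some[OF mar] Cons by auto
        qed
      qed
      then show ?thesis by blast
    qed
  qed
qed

lemma rural:
  assumes fA: "finite A" and fB: "finite B"
    and s1: "stable A B PA PB \<mu>" and s2: "stable A B PA PB \<nu>" and x: "x \<in> Domain \<nu>"
  shows "x \<in> Domain \<mu>"
proof (rule ccontr)
  assume nx: "x \<notin> Domain \<mu>"
  have m1: "marriage A B \<mu>" and m2: "marriage A B \<nu>" using s1 s2 by (auto dest: stableD)
  define Wn where "Wn = {a \<in> A. \<exists>z. (a,z) \<in> \<nu> \<and> prefers (PA a) z (wpartner \<mu> a)}"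
  define Mm where "Mm = {b \<in> B. \<exists>u. (u,b) \<in> \<mu> \<and> prefers (PB b) u (mpartner \<nu> b)}"
  have c1: "z \<in> Mm" if aW: "a \<in> Wn" and az: "(a,z) \<in> \<nu>" for a z
  proof -
    obtain z' where z': "(a,z') \<in> \<nu>" "prefers (PA a) z' (wpartner \<mu> a)" "a \<in> A" using aW unfolding Wn_def by blast
    have zz: "z' = z" using marr_uniq1[OF m2 z'(1) az] .
    have zB: "z \<in> B" and acc: "z \<in> set (PA a)" "a \<in> set (PB z)" using stableD(2,4)[OF s2 az] by auto
    have np: "\<not> prefers (PB z) a (mpartner \<mu> z)" using stableD(3)[OF s1 z'(3) zB] z' zz by blast
    then obtain u where u: "mpartner \<mu> z = Some u" "(u,z) \<in> \<mu>" using mp_cases[OF m1, of z] acc by auto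
    have uacc: "u \<in> set (PB z)" using stableD(2)[OF s1 u(2)] by auto
    have "u \<noteq> a" using u z' zz wp_Some[OF m1, of a z] by auto
    then have "pos (PB z) u < pos (PB z) a" using np u acc uacc pos_inj[OF uacc acc(2)] by (auto simp: not_less order.order_iff_strict)
    then show ?thesis unfolding Mm_def using zB u uacc mp_Some[OF m2 az] by auto
  qed
  have c2: "u \<in> Wn" if bM: "b \<in> Mm" and ub: "(u,b) \<in> \<mu>" for b u
  proof -
    obtain u' where u': "(u',b) \<in> \<mu>" "prefers (PB b) u' (mpartner \<nu> b)" "b \<in> B" using bM unfolding Mm_def by blast
    have uu: "u' = u" using marr_uniq2[OF m1 u'(1) ub] .
    have uA: "u \<in> A" and acc: "b \<in> set (PA u)" "u \<in> set (PB b)" using stableD(2,4)[OF s1 ub] by auto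
    have np: "\<not> prefers (PA u) b (wpartner \<nu> u)" using stableD(3)[OF s2 uA u'(3)] u' uu by blast
    then obtain z where z: "wpartner \<nu> u = Some z" "(u,z) \<in> \<nu>" using wp_cases[OF m2, of u] acc by auto
    have zacc: "z \<in> set (PA u)" using stableD(2)[OF s2 z(2)] by auto
    have "z \<noteq> b" using z u' uu mp_Some[OF m2, of u b] by auto
    then have "pos (PA u) z < pos (PA u) b" using np z acc zacc pos_inj[OF zacc acc(1)] by (auto simp: not_less order.order_iff_strict)
    then show ?thesis unfolding Wn_def using uA z zacc wp_Some[OF m1 ub] by auto
  qed
  define F where "F = (\<lambda>a. the (wpartner \<nu> a))"
  define G where "G = (\<lambda>b. the (mpartner \<mu> b))"
  have Fin: "F a \<in> Mm \<and> (a, F a) \<in> \<nu>" if aW: "a \<in> Wn" for a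
  proof -
    obtain z where "(a,z) \<in> \<nu>" using aW unfolding Wn_def by blast
    then show ?thesis using c1[OF aW \<open>(a,z) \<in> \<nu>\<close>] wp_Some[OF m2] F_def by auto
  qed
  have Gin: "G b \<in> Wn \<and> (G b, b) \<in> \<mu>" if bM: "b \<in> Mm" for b
  proof -
    obtain u where "(u,b) \<in> \<mu>" using bM unfolding Mm_def by blast
    then show ?thesis using c2[OF bM \<open>(u,b) \<in> \<mu>\<close>] mp_Some[OF m1] G_def by auto
  qed
  have fW: "finite Wn" and fM: "finite Mm" using fA fB Wn_def Mm_def by auto
  have "inj_on F Wn" by (rule inj_onI) (metis Fin marr_uniq2[OF m2])
  then have le1: "card Wn \<le> card Mm" using card_inj_on_le[of F Wn Mm] Fin fM by auto
  have injG: "inj_on G Mm" by (rule inj_onI) (metis Gin marr_uniq1[OF m1])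
  then have le2: "card Mm \<le> card Wn" using card_inj_on_le[of G Mm Wn] Gin fW by auto
  have "G ` Mm = Wn"
    by (rule card_subset_eq[OF fW]) (use Gin card_image[OF injG] le1 le2 in auto)
  moreover have "x \<in> Wn"
  proof -
    obtain z where z: "(x,z) \<in> \<nu>" using x by auto
    then have "x \<in> A" "z \<in> set (PA x)" using stableD(2,4)[OF s2 z] by auto
    moreover have "wpartner \<mu> x = None" using nx by (auto intro: wp_None)
    ultimately show ?thesis unfolding Wn_def using z by auto
  qed
  ultimately obtain b where "b \<in> Mm" "x = G b" by auto
  then show False using Gin nx by auto
qed


definition lst_of :: "'a set \<Rightarrow> 'a list" where "lst_of S = (SOME l. distinct l \<and> set l = S)"
lemma lst_of: "finite S \<Longrightarrow> distinct (lst_of S) \<and> set (lst_of S) = S"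
  unfolding lst_of_def by (rule someI_ex) (metis finite_distinct_list)

definition mk :: "'a list \<Rightarrow> 'a set \<Rightarrow> 'a list" where "mk first S = first @ lst_of (S - set first)"
lemma mk: "finite S \<Longrightarrow> distinct first \<Longrightarrow> set first \<subseteq> S \<Longrightarrow> distinct (mk first S) \<and> set (mk first S) = S"
  unfolding mk_def using lst_of[of "S - set first"] by auto

definition rl :: "'a set \<Rightarrow> 'a set \<Rightarrow> 'a set \<Rightarrow> 'a set \<Rightarrow> ('a\<Rightarrow>'a) \<Rightarrow> ('a\<Rightarrow>'a) \<Rightarrow> ('a\<Rightarrow>'a list) \<Rightarrow> 'a \<Rightarrow> 'a list" where
  "rl A A' B B' f ginv P x = (if x \<in> A then mk (P x @ [f x]) (B \<union> B') else if x \<in> A' then mk [ginv x] (B \<union> B') else [])"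

lemma rl_full:
  assumes "finite B" "finite B'" "B \<inter> B' = {}" "\<forall>x\<in>A. f x \<in> B'" "\<forall>x\<in>A'. ginv x \<in> B" "P \<in> profiles A B"
  shows "rl A A' B B' f ginv P \<in> full_profiles (A \<union> A') (B \<union> B')"
proof -
  have fin: "finite (B \<union> B')" using assms by auto
  have "distinct (rl A A' B B' f ginv P x) \<and> set (rl A A' B B' f ginv P x) = B \<union> B'" if "x \<in> A \<union> A'" for x
  proof (cases "x \<in> A")
    case True
    have "distinct (P x @ [f x])" "set (P x @ [f x]) \<subseteq> B \<union> B'"
      using assms True unfolding profiles_def by (auto, blast)
    then show ?thesis using mk[OF fin] True unfolding rl_def by auto
  next
    case False
    then show ?thesis using mk[OF fin, of "[ginv x]"] that assms unfolding rl_def by auto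
  qed
  moreover have "rl A A' B B' f ginv P x = []" if "x \<notin> A \<union> A'" for x
    using that unfolding rl_def by auto
  ultimately show ?thesis unfolding full_profiles_def profiles_def by auto
qed

lemma wp_conv: "wpartner (R\<inverse>) = mpartner R"
  by (auto simp: wpartner_def mpartner_def fun_eq_iff)

locale red =
  fixes A A' B B' :: "'a set" and f finv g ginv :: "'a \<Rightarrow> 'a" and PA PB :: "'a \<Rightarrow> 'a list"
  assumes fin: "finite A" "finite A'" "finite B" "finite B'"
    and disj: "A \<inter> A' = {}" "A \<inter> B = {}" "A \<inter> B' = {}" "A' \<inter> B = {}" "A' \<inter> B' = {}" "B \<inter> B' = {}"
    and f: "\<forall>x\<in>A. f x \<in> B' \<and> finv (f x) = x" and finv: "\<forall>y\<in>B'. finv y \<in> A"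
    and g: "\<forall>y\<in>B. g y \<in> A' \<and> ginv (g y) = y" and ginv: "\<forall>x\<in>A'. ginv x \<in> B"
    and PA: "PA \<in> profiles A B" and PB: "PB \<in> profiles B A"
begin

abbreviation "BA \<equiv> rl A A' B B' f ginv PA"
abbreviation "BB \<equiv> rl B B' A A' g finv PB"

lemma swapped: "red B B' A A' g ginv f finv PB PA"
  using fin disj f finv g ginv PA PB unfolding red_def by blast

lemma PA_sub: "x \<in> A \<Longrightarrow> set (PA x) \<subseteq> B" using PA unfolding profiles_def by auto

lemma BA_A: "x \<in> A \<Longrightarrow> \<exists>r. BA x = PA x @ f x # r"
  unfolding rl_def mk_def by auto
lemma BA_A': "x \<in> A' \<Longrightarrow> \<exists>r. BA x = ginv x # r"
  using disj unfolding rl_def mk_def by auto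

lemma fx_notin: "x \<in> A \<Longrightarrow> f x \<notin> set (PA x)"
  using f PA_sub disj by blast

lemma L1a:
  assumes st: "stable (A \<union> A') (B \<union> B') BA BB \<nu>" and xz: "(x,z) \<in> \<nu>" and x: "x \<in> A" and z: "z \<in> B"
  shows "z \<in> set (PA x)"
proof (rule ccontr)
  assume nz: "z \<notin> set (PA x)"
  have m: "marriage (A \<union> A') (B \<union> B') \<nu>" using stableD(1)[OF st] .
  obtain r where r: "BA x = PA x @ f x # r" using BA_A[OF x] by blast
  have fx: "f x \<in> B'" "finv (f x) = x" using f x by auto
  have zfx: "z \<noteq> f x" using z fx disj by auto
  have fxn: "f x \<notin> set (PA x)" using fx_notin[OF x] .
  have p1: "prefers (BA x) (f x) (wpartner \<nu> x)"
    using wp_Some[OF m xz] r nz zfx fxn by (simp add: pos_append)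
  have fxA: "f x \<notin> B" using fx disj by auto
  obtain r' where r': "BB (f x) = x # r'" using red.BA_A'[OF swapped, of "f x"] fx by auto
  have p2: "prefers (BB (f x)) x (mpartner \<nu> (f x))"
  proof (cases "mpartner \<nu> (f x)")
    case (Some u)
    then have "(u, f x) \<in> \<nu>" using mp_cases[OF m, of "f x"] by auto
    then have "u \<noteq> x" using marr_uniq1[OF m xz] zfx by auto
    then show ?thesis using Some r' by simp
  qed (use r' in simp)
  show False using stableD(3)[OF st _ _ p1 p2] x fx by auto
qed

lemma L2:
  assumes st: "stable (A \<union> A') (B \<union> B') BA BB \<nu>" and x: "x \<in> A" and nz: "\<forall>z\<in>B. (x,z) \<notin> \<nu>"
  shows "(x, f x) \<in> \<nu>"
proof (rule ccontr)
  assume nfx: "(x, f x) \<notin> \<nu>"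
  have m: "marriage (A \<union> A') (B \<union> B') \<nu>" using stableD(1)[OF st] .
  obtain r where r: "BA x = PA x @ f x # r" using BA_A[OF x] by blast
  have fx: "f x \<in> B'" "finv (f x) = x" using f x by auto
  have fxn: "f x \<notin> set (PA x)" using fx_notin[OF x] .
  have p1: "prefers (BA x) (f x) (wpartner \<nu> x)"
  proof (cases "wpartner \<nu> x")
    case (Some z)
    then have xz: "(x,z) \<in> \<nu>" using wp_cases[OF m, of x] by auto
    then have "z \<in> B'" "z \<noteq> f x" using stableD(4)[OF st xz] nz nfx by auto
    then have "z \<notin> set (PA x)" using PA_sub[OF x] disj by auto
    then show ?thesis using Some r fxn \<open>z \<noteq> f x\<close> by (simp add: pos_append)
  qed (use r in simp)
  obtain r' where r': "BB (f x) = x # r'" using red.BA_A'[OF swapped, of "f x"] fx by auto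
  have p2: "prefers (BB (f x)) x (mpartner \<nu> (f x))"
  proof (cases "mpartner \<nu> (f x)")
    case (Some u)
    then have "(u, f x) \<in> \<nu>" using mp_cases[OF m, of "f x"] by auto
    then have "u \<noteq> x" using nfx by auto
    then show ?thesis using Some r' by simp
  qed (use r' in simp)
  show False using stableD(3)[OF st _ _ p1 p2] x fx by auto
qed

lemma transfer:
  assumes st: "stable (A \<union> A') (B \<union> B') BA BB \<nu>" and x: "x \<in> A"
    and p: "prefers (PA x) y (wpartner (\<nu> \<inter> A \<times> B) x)"
  shows "prefers (BA x) y (wpartner \<nu> x)"
proof -
  have m: "marriage (A \<union> A') (B \<union> B') \<nu>" using stableD(1)[OF st] .
  have mr: "marriage A B (\<nu> \<inter> A \<times> B)" using m unfolding marriage_def by auto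
  obtain r where r: "BA x = PA x @ f x # r" using BA_A[OF x] by blast
  show ?thesis
  proof (cases "\<exists>z\<in>B. (x,z) \<in> \<nu>")
    case True
    then obtain z where z: "z \<in> B" "(x,z) \<in> \<nu>" by blast
    have "wpartner (\<nu> \<inter> A \<times> B) x = Some z" using wp_Some[OF mr] z x by auto
    moreover have "wpartner \<nu> x = Some z" using wp_Some[OF m z(2)] .
    moreover have "z \<in> set (PA x)" using L1a[OF st z(2) x z(1)] .
    ultimately show ?thesis using p r by (simp add: pos_append)
  next
    case False
    then have "(x, f x) \<in> \<nu>" using L2[OF st x] by blast
    then have "wpartner \<nu> x = Some (f x)" using wp_Some[OF m] by blast
    moreover have "wpartner (\<nu> \<inter> A \<times> B) x = None" using False by (auto intro: wp_None)
    ultimately show ?thesis using p r fx_notin[OF x] pos_lt[of y "PA x"] by (simp add: pos_append)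
  qed
qed

lemma stable_conv: "stable (A \<union> A') (B \<union> B') BA BB \<nu> \<Longrightarrow> stable (B \<union> B') (A \<union> A') BB BA (\<nu>\<inverse>)"
  by (rule stable_swap)

lemma restrict:
  assumes st: "stable (A \<union> A') (B \<union> B') BA BB \<nu>"
  shows "stable A B PA PB (\<nu> \<inter> A \<times> B)"
proof (rule stableI)
  have m: "marriage (A \<union> A') (B \<union> B') \<nu>" using stableD(1)[OF st] .
  show "marriage A B (\<nu> \<inter> A \<times> B)" using m unfolding marriage_def by auto
  have st': "stable (B \<union> B') (A \<union> A') BB BA (\<nu>\<inverse>)" using stable_conv[OF st] .
  fix x y assume "(x,y) \<in> \<nu> \<inter> A \<times> B"
  then show "y \<in> set (PA x) \<and> x \<in> set (PB y)"
    using L1a[OF st, of x y] red.L1a[OF swapped st', of y x] by auto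
next
  have st': "stable (B \<union> B') (A \<union> A') BB BA (\<nu>\<inverse>)" using stable_conv[OF st] .
  fix x y assume x: "x \<in> A" and y: "y \<in> B" and p1: "prefers (PA x) y (wpartner (\<nu> \<inter> A \<times> B) x)"
    and p2: "prefers (PB y) x (mpartner (\<nu> \<inter> A \<times> B) y)"
  have q1: "prefers (BA x) y (wpartner \<nu> x)" using transfer[OF st x p1] .
  have e: "(\<nu> \<inter> A \<times> B)\<inverse> = \<nu>\<inverse> \<inter> B \<times> A" by auto
  have "prefers (PB y) x (wpartner (\<nu>\<inverse> \<inter> B \<times> A) y)" using p2 wp_conv[of "\<nu> \<inter> A \<times> B"] e by simp
  then have "prefers (BB y) x (wpartner (\<nu>\<inverse>) y)" using red.transfer[OF swapped st' y] by blast
  then have q2: "prefers (BB y) x (mpartner \<nu> y)" using wp_conv by metis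
  show False using stableD(3)[OF st _ _ q1 q2] x y by auto
qed

end


theorem lemma23:
  fixes n :: nat and W W' M M' :: "'a set" and w m' :: 'a
  assumes "finite W" "finite W'" "finite M" "finite M'"
    and "card W = n" "card W' = n" "card M = n" "card M' = n"
    and "W \<inter> W' = {}" "W \<inter> M = {}" "W \<inter> M' = {}"
    and "W' \<inter> M = {}" "W' \<inter> M' = {}" "M \<inter> M' = {}"
    and "w \<in> W" "m' \<in> M'"
  shows "\<exists>FW FM.
    (\<forall>PW\<in>profiles W M. FW PW \<in> full_profiles (W \<union> W') (M \<union> M')) \<and>
    (\<forall>PM\<in>profiles M W. FM PM \<in> full_profiles (M \<union> M') (W \<union> W')) \<and>
    (\<forall>PW\<in>profiles W M. \<forall>PM\<in>profiles M W.
       ((\<exists>\<mu>. stable W M PW PM \<mu> \<and> w \<notin> Domain \<mu>) \<longleftrightarrow>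
        (\<exists>\<mu>. stable (W \<union> W') (M \<union> M') (FW PW) (FM PM) \<mu> \<and> (w, m') \<in> \<mu>)) \<and>
       ((\<exists>\<mu>. stable (W \<union> W') (M \<union> M') (FW PW) (FM PM) \<mu> \<and> (w, m') \<in> \<mu>) \<longleftrightarrow>
        (\<forall>\<mu>. stable (W \<union> W') (M \<union> M') (FW PW) (FM PM) \<mu> \<longrightarrow> (w, m') \<in> \<mu>)))"
proof -
  note as = assms
  have "card (W - {w}) = card (M' - {m'})" using as by (simp add: card_Diff_singleton)
  then obtain h where h: "bij_betw h (W - {w}) (M' - {m'})"
    using finite_same_card_bij[of "W - {w}" "M' - {m'}"] as by auto
  obtain g where g: "bij_betw g M W'" using finite_same_card_bij[of M W'] as by auto
  define f where "f = h(w := m')"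
  define finv where "finv = (\<lambda>y. if y = m' then w else inv_into (W - {w}) h y)"
  define ginv where "ginv = inv_into M g"
  have hi: "bij_betw (inv_into (W - {w}) h) (M' - {m'}) (W - {w})" using bij_betw_inv_into[OF h] .
  have fp: "\<forall>x\<in>W. f x \<in> M' \<and> finv (f x) = x"
  proof
    fix x assume x: "x \<in> W"
    show "f x \<in> M' \<and> finv (f x) = x"
    proof (cases "x = w")
      case True then show ?thesis using as unfolding f_def finv_def by auto
    next
      case False
      then have "h x \<in> M' - {m'}" using bij_betw_apply[OF h] x by auto
      moreover have "inv_into (W - {w}) h (h x) = x" using bij_betw_inv_into_left[OF h] x False by auto
      ultimately show ?thesis using False unfolding f_def finv_def by auto
    qed
  qed
  have finvp: "\<forall>y\<in>M'. finv y \<in> W" using bij_betw_apply[OF hi] as unfolding finv_def by auto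
  have gp: "\<forall>y\<in>M. g y \<in> W' \<and> ginv (g y) = y"
    using bij_betw_apply[OF g] bij_betw_inv_into_left[OF g] unfolding ginv_def by auto
  have ginvp: "\<forall>x\<in>W'. ginv x \<in> M" using bij_betw_apply[OF bij_betw_inv_into[OF g]] unfolding ginv_def by auto
  have fw: "f w = m'" unfolding f_def by simp
  have R: "red W W' M M' f finv g ginv PW PM" if "PW \<in> profiles W M" "PM \<in> profiles M W" for PW PM
    unfolding red_def using as fp finvp gp ginvp that by blast
  have G1: "\<forall>PW\<in>profiles W M. rl W W' M M' f ginv PW \<in> full_profiles (W \<union> W') (M \<union> M')"
    by (intro ballI rl_full) (use as fp ginvp in auto)
  have G2: "\<forall>PM\<in>profiles M W. rl M M' W W' g finv PM \<in> full_profiles (M \<union> M') (W \<union> W')"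
    by (intro ballI rl_full) (use as gp finvp in auto)
  have G3: "\<forall>PW\<in>profiles W M. \<forall>PM\<in>profiles M W.
       ((\<exists>\<mu>. stable W M PW PM \<mu> \<and> w \<notin> Domain \<mu>) \<longleftrightarrow>
        (\<exists>\<mu>. stable (W \<union> W') (M \<union> M') (rl W W' M M' f ginv PW) (rl M M' W W' g finv PM) \<mu> \<and> (w, m') \<in> \<mu>)) \<and>
       ((\<exists>\<mu>. stable (W \<union> W') (M \<union> M') (rl W W' M M' f ginv PW) (rl M M' W W' g finv PM) \<mu> \<and> (w, m') \<in> \<mu>) \<longleftrightarrow>
        (\<forall>\<mu>. stable (W \<union> W') (M \<union> M') (rl W W' M M' f ginv PW) (rl M M' W W' g finv PM) \<mu> \<longrightarrow> (w, m') \<in> \<mu>))"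
  proof (intro ballI conjI)
    fix PW PM assume PW: "PW \<in> profiles W M" and PM: "PM \<in> profiles M W"
    interpret r: red W W' M M' f finv g ginv PW PM using R[OF PW PM] .
    let ?S = "stable (W \<union> W') (M \<union> M') (rl W W' M M' f ginv PW) (rl M M' W W' g finv PM)"
    have F1: "rl W W' M M' f ginv PW \<in> full_profiles (W \<union> W') (M \<union> M')"
      using PW by (intro rl_full) (use as fp ginvp in auto)
    have F2: "rl M M' W W' g finv PM \<in> full_profiles (M \<union> M') (W \<union> W')"
      using PM by (intro rl_full) (use as gp finvp in auto)
    have ex: "\<exists>\<nu>. ?S \<nu>"
      by (rule exists_stable) (use F1 F2 as in \<open>auto simp: full_profiles_def profiles_def\<close>)
    have o13: "(w, m') \<in> \<nu>" if sm: "stable W M PW PM \<mu>" "w \<notin> Domain \<mu>" and sn: "?S \<nu>" for \<mu> \<nu>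
    proof -
      have s2: "stable W M PW PM (\<nu> \<inter> W \<times> M)" using r.restrict[OF sn] .
      have "w \<notin> Domain (\<nu> \<inter> W \<times> M)" using rural[OF as(1) as(3) sm(1) s2] sm(2) by blast
      then have "\<forall>z\<in>M. (w,z) \<notin> \<nu>" using as by auto
      then show ?thesis using r.L2[OF sn as(15)] fw by simp
    qed
    have o21: "\<exists>\<mu>. stable W M PW PM \<mu> \<and> w \<notin> Domain \<mu>" if sn: "?S \<nu>" "(w,m') \<in> \<nu>" for \<nu>
    proof (intro exI conjI)
      show "stable W M PW PM (\<nu> \<inter> W \<times> M)" using r.restrict[OF sn(1)] .
      have m: "marriage (W \<union> W') (M \<union> M') \<nu>" using stableD(1)[OF sn(1)] .
      show "w \<notin> Domain (\<nu> \<inter> W \<times> M)"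
      proof
        assume "w \<in> Domain (\<nu> \<inter> W \<times> M)"
        then obtain z where "(w,z) \<in> \<nu>" "z \<in> M" by auto
        then show False using marr_uniq1[OF m _ sn(2)] as by auto
      qed
    qed
    show "(\<exists>\<mu>. stable W M PW PM \<mu> \<and> w \<notin> Domain \<mu>) = (\<exists>\<mu>. ?S \<mu> \<and> (w, m') \<in> \<mu>)"
      using o13 o21 ex by blast
    show "(\<exists>\<mu>. ?S \<mu> \<and> (w, m') \<in> \<mu>) = (\<forall>\<mu>. ?S \<mu> \<longrightarrow> (w, m') \<in> \<mu>)"
      using o13 o21 ex by blast
  qed
  show ?thesis
    by (rule exI[of _ "\<lambda>P. rl W W' M M' f ginv P"], rule exI[of _ "\<lambda>P. rl M M' W W' g finv P"])
      (use G1 G2 G3 in blast)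
qed

end
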